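(* Let $\gamma:S^1\to\mathbb{R}^{2d}$ be a closed symplectically convex curve, parametrized so that $\omega(\gamma'(t),\gamma''(t))=1$ for all $t$. Let $X=\{(v,t)\in\mathbb{R}^{2d}\times S^1:\omega(v,\gamma'(t))=0\}$, $\Psi:X\to\mathbb{R}^{2d}$, $\Psi(v,t)=\gamma(t)+v$, and let $\Sigma$ (the wall) be the set of singular values of $\Psi$. Then $$\Sigma=\{P\in\mathbb{R}^{2d}:\exists t\in S^1\ \text{with}\ \omega(P,\gamma'(t))=\omega(\gamma(t),\gamma'(t))\ \text{and}\ \omega(P,\gamma''(t))=\omega(\gamma(t),\gamma''(t))\}.$$ Moreover, the set $\Sigma^{\mathrm{sing}}$ of singular points of $\Sigma$ consists of those $P\in\mathbb{R}^{2d}$ for which there exists $t\in S^1$ with $\omega(P,\gamma'(t))=\omega(\gamma(t),\gamma'(t))$, $\omega(P,\gamma''(t))=\omega(\gamma(t),\gamma''(t))$, and $\omega(P,\gamma'''(t))=\omega(\gamma'(t),\gamma''(t))+\omega(\gamma(t),\gamma'''(t))$.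
   Context: $\mathbb{R}^{2d}$ carries the standard symplectic form $\omega$. A curve $\gamma$ is symplectically convex if $\omega(\gamma'(t),\gamma''(t))>0$ for all $t$. The image of $\Psi$ is the domain of the outer symplectic billiard relation of $\gamma$. Let $\Delta=\{(P,t)\in\mathbb{R}^{2d}\times S^1:\omega(P-\gamma(t),\gamma'(t))=0,\ \omega(P-\gamma(t),\gamma''(t))=0\}$ (a smooth $(2d-1)$-manifold), so that $\Sigma$ is its projection to $\mathbb{R}^{2d}$; a singular point of $\Sigma$ is a point $P$ such that for some $(P,t)\in\Delta$ the differential of the projection $\Delta\to\mathbb{R}^{2d}$ at $(P,t)$ has rank less than $2d-1$. *)

theory Defs
  imports "HOL-Analysis.Analysis"
begin

text \<open>Phase space R^{2d} is modelled as (real^'d) \<times> (real^'d), points (q,p),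
  with the standard symplectic form \<omega>((q,p),(q',p')) = q.p' - p.q'.\<close>

definition symp :: "(real^'d) \<times> (real^'d) \<Rightarrow> (real^'d) \<times> (real^'d) \<Rightarrow> real" where
  "symp x y = fst x \<bullet> snd y - snd x \<bullet> fst y"

definition tangent_space :: "'a::real_normed_vector set \<Rightarrow> 'a \<Rightarrow> 'a set" where
  "tangent_space S x = {v. \<exists>c::real \<Rightarrow> 'a. c 0 = x \<and> (\<forall>\<^sub>F s in nhds 0. c s \<in> S)
                          \<and> (c has_vector_derivative v) (at 0)}"

definition restr_rank :: "('a::real_normed_vector \<Rightarrow> 'b::real_normed_vector) \<Rightarrow> 'a set \<Rightarrow> 'a \<Rightarrow> nat" where
  "restr_rank f S x = dim (frechet_derivative f (at x) ` tangent_space S x)"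

definition singular_values :: "('a::real_normed_vector \<Rightarrow> 'b::euclidean_space) \<Rightarrow> 'a set \<Rightarrow> 'b set" where
  "singular_values f S = {f x | x. x \<in> S \<and> restr_rank f S x < DIM('b)}"

end

theory Submission
  imports Defs
begin


definition Jm :: "(real^'d) \<times> (real^'d) \<Rightarrow> (real^'d) \<times> (real^'d)" where
  "Jm y = (snd y, - fst y)"

lemma symp_inner: "symp x y = x \<bullet> Jm y"
  by (cases x; cases y) (simp add: symp_def Jm_def inner_Pair)

lemma Jm_lin: "bounded_linear Jm"
  unfolding Jm_def by (intro bounded_linear_Pair bounded_linear_snd bounded_linear_minus bounded_linear_fst)

lemma Jm_zero: "Jm y = 0 \<longleftrightarrow> y = 0"
  by (cases y) (auto simp: Jm_def zero_prod_def)

lemma bb_symp: "bounded_bilinear symp"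
proof -
  have "bounded_bilinear (\<lambda>x y. (\<lambda>x. x) x \<bullet> Jm y)"
    using bounded_bilinear.comp[OF bounded_bilinear_inner bounded_linear_ident Jm_lin] by simp
  then show ?thesis by (simp add: symp_inner[abs_def])
qed

lemma symp_add_left: "symp (x + y) z = symp x z + symp y z"
  and symp_add_right: "symp z (x + y) = symp z x + symp z y"
  and symp_diff_left: "symp (x - y) z = symp x z - symp y z"
  and symp_diff_right: "symp z (x - y) = symp z x - symp z y"
  and symp_scale_left: "symp (a *\<^sub>R x) z = a * symp x z"
  and symp_scale_right: "symp z (a *\<^sub>R x) = a * symp z x"
  and symp_minus_left: "symp (- x) z = - symp x z"
  and symp_minus_right: "symp z (- x) = - symp z x"
  and symp_antisym: "symp x y = - symp y x"
  and symp_self: "symp x x = 0"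
  and symp_zero_left: "symp 0 z = 0"
  and symp_zero_right: "symp z 0 = 0"
  by (auto simp: symp_def inner_add_left inner_add_right inner_diff_left inner_diff_right inner_commute algebra_simps)

lemmas symp_simps = symp_add_left symp_add_right symp_diff_left symp_diff_right symp_scale_left
  symp_scale_right symp_minus_left symp_minus_right symp_self symp_zero_left symp_zero_right

lemma symp_vd:
  assumes "(f has_vector_derivative f') (at x within s)"
    and "(g has_vector_derivative g') (at x within s)"
  shows "((\<lambda>x. symp (f x) (g x)) has_vector_derivative (symp (f x) g' + symp f' (g x))) (at x within s)"
  by (rule bounded_bilinear.has_vector_derivative[OF bb_symp assms])

lemma D_lin:
  assumes smooth: "\<And>k t. (D k has_vector_derivative D (Suc k) t) (at t)"
  shows "((\<lambda>\<tau>::real. D k (t + \<tau> * s)) has_vector_derivative s *\<^sub>R D (Suc k) t) (at 0)"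
proof -
  have "((\<lambda>\<tau>::real. t + \<tau> * s) has_vector_derivative s) (at 0)"
    by (auto intro!: derivative_eq_intros simp: has_vector_derivative_def)
  from vector_diff_chain_at[OF this, of "D k"] smooth[of k t]
  show ?thesis by (simp add: o_def)
qed

lemma tangent_constraint:
  fixes g :: "'a::real_normed_vector \<Rightarrow> real"
  assumes "u \<in> tangent_space S x"
    and "\<forall>y\<in>S. g y = 0"
    and "\<And>c. c 0 = x \<Longrightarrow> (c has_vector_derivative u) (at 0) \<Longrightarrow> ((\<lambda>\<tau>. g (c \<tau>)) has_vector_derivative L) (at 0)"
  shows "L = 0"
proof -
  obtain c where c: "c 0 = x" "\<forall>\<^sub>F s in nhds 0. c s \<in> S" "(c has_vector_derivative u) (at 0)"
    using assms(1) unfolding tangent_space_def by blast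
  have d: "((\<lambda>\<tau>. g (c \<tau>)) has_vector_derivative L) (at 0)" using assms(3) c by blast
  have ev: "\<forall>\<^sub>F s in nhds 0. g (c s) = 0" using c(2) assms(2) by (auto elim: eventually_mono)
  have "((\<lambda>_. 0::real) has_vector_derivative 0) (at 0)" by (rule has_vector_derivative_const)
  then have "((\<lambda>\<tau>. g (c \<tau>)) has_vector_derivative 0) (at 0)"
    unfolding has_vector_derivative_def
  proof (rule has_derivative_transform_eventually)
    show "\<forall>\<^sub>F x' in at 0. 0 = g (c x')"
      using ev by (auto simp: eventually_at_filter elim: eventually_mono)
    show "0 = g (c 0)" using eventually_nhds_x_imp_x[OF ev] by simp
  qed simp
  then show ?thesis using vector_derivative_unique_at d by blast
qed



lemma curve_parts:
  assumes smooth: "\<And>k t. (D k has_vector_derivative D (Suc k) t) (at t)"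
    and c: "(c has_vector_derivative (a, s)) (at 0)"
  shows "((\<lambda>\<tau>. fst (c \<tau>)) has_vector_derivative a) (at 0)"
    "((\<lambda>\<tau>. snd (c \<tau>)) has_vector_derivative s) (at 0)"
    "((\<lambda>\<tau>. D k (snd (c \<tau>))) has_vector_derivative s *\<^sub>R D (Suc k) (snd (c 0))) (at 0)"
proof -
  show 1: "((\<lambda>\<tau>. fst (c \<tau>)) has_vector_derivative a) (at 0)"
    using has_derivative_fst[OF c[unfolded has_vector_derivative_def]]
    by (simp add: has_vector_derivative_def)
  show 2: "((\<lambda>\<tau>. snd (c \<tau>)) has_vector_derivative s) (at 0)"
    using has_derivative_snd[OF c[unfolded has_vector_derivative_def]]
    by (simp add: has_vector_derivative_def)
  show "((\<lambda>\<tau>. D k (snd (c \<tau>))) has_vector_derivative s *\<^sub>R D (Suc k) (snd (c 0))) (at 0)"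
    using vector_diff_chain_at[OF 2 smooth[of k "snd (c 0)"]] by (simp add: o_def)
qed

lemma X_tangent:
  assumes smooth: "\<And>k t. (D k has_vector_derivative D (Suc k) t) (at t)"
    and u: "(a, s) \<in> tangent_space {(v, t). symp v (D 1 t) = 0} (v, t)"
  shows "symp a (D 1 t) + s * symp v (D 2 t) = 0"
proof -
  have "symp v (s *\<^sub>R D 2 t) + symp a (D 1 t) = 0"
  proof (rule tangent_constraint[OF u, where g = "\<lambda>(v, t). symp v (D 1 t)"])
    show "\<forall>y\<in>{(v, t). symp v (D 1 t) = 0}. (case y of (v, t) \<Rightarrow> symp v (D 1 t)) = 0" by auto
    fix c assume c0: "c 0 = (v, t)" and c: "(c has_vector_derivative (a, s)) (at 0)"
    have "((\<lambda>\<tau>. symp (fst (c \<tau>)) (D 1 (snd (c \<tau>)))) has_vector_derivative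
       symp (fst (c 0)) (s *\<^sub>R D (Suc 1) (snd (c 0))) + symp a (D 1 (snd (c 0)))) (at 0)"
      by (rule symp_vd[OF curve_parts(1)[where D=D, OF smooth c] curve_parts(3)[where D=D, OF smooth c]])
    then show "((\<lambda>\<tau>. case c \<tau> of (v, t) \<Rightarrow> symp v (D 1 t)) has_vector_derivative
        symp v (s *\<^sub>R D 2 t) + symp a (D 1 t)) (at 0)"
      using c0 by (simp add: case_prod_beta numeral_2_eq_2)
  qed
  then show ?thesis by (simp add: symp_simps)
qed

lemma X_curve:
  assumes smooth: "\<And>k t. (D k has_vector_derivative D (Suc k) t) (at t)"
    and normalized: "\<And>t. symp (D 1 t) (D 2 t) = 1"
    and vt: "symp v (D 1 t) = 0"
  shows "(a + (symp a (D 1 t) + s * symp v (D 2 t)) *\<^sub>R D 2 t, s) \<in> tangent_space {(v, t). symp v (D 1 t) = 0} (v, t)"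
proof -
  define w where "w = (\<lambda>\<tau>::real. v + \<tau> *\<^sub>R a)"
  define c where "c = (\<lambda>\<tau>. (w \<tau> + symp (w \<tau>) (D 1 (t + \<tau> * s)) *\<^sub>R D 2 (t + \<tau> * s), t + \<tau> * s))"
  have n21: "symp (D 2 t') (D 1 t') = -1" for t' using normalized[of t'] symp_antisym[of "D 2 t'" "D 1 t'"] by simp
  have inX: "c \<tau> \<in> {(v, t). symp v (D 1 t) = 0}" for \<tau>
    using n21 by (simp add: c_def symp_simps)
  have c0: "c 0 = (v, t)" using vt by (simp add: c_def w_def)
  have wd: "(w has_vector_derivative a) (at 0)" unfolding w_def
    by (auto intro!: derivative_eq_intros)
  have sd: "((\<lambda>\<tau>::real. t + \<tau> * s) has_vector_derivative s) (at 0)"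
    by (auto intro!: derivative_eq_intros simp: has_vector_derivative_def)
  have e: "((\<lambda>\<tau>. symp (w \<tau>) (D 1 (t + \<tau> * s))) has_vector_derivative
      symp (w 0) (s *\<^sub>R D 2 t) + symp a (D 1 t)) (at 0)"
    using symp_vd[OF wd D_lin[where D=D and k=1 and t=t and s=s, OF smooth]] by (simp add: numeral_2_eq_2)
  have e': "((\<lambda>\<tau>. symp (w \<tau>) (D 1 (t + \<tau> * s))) has_real_derivative
      symp (w 0) (s *\<^sub>R D 2 t) + symp a (D 1 t)) (at 0)"
    using e by (simp add: has_real_derivative_iff_has_vector_derivative)
  have "((\<lambda>\<tau>. w \<tau> + symp (w \<tau>) (D 1 (t + \<tau> * s)) *\<^sub>R D 2 (t + \<tau> * s)) has_vector_derivative
      a + (symp (w 0) (D 1 (t + 0 * s)) *\<^sub>R (s *\<^sub>R D 3 t) + (symp (w 0) (s *\<^sub>R D 2 t) + symp a (D 1 t)) *\<^sub>R D 2 (t + 0 * s))) (at 0)"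
    using has_vector_derivative_add[OF wd has_vector_derivative_scaleR[OF e' D_lin[where D=D and k=2 and t=t and s=s, OF smooth]]]
    by (simp add: numeral_3_eq_3 numeral_2_eq_2)
  then have "(c has_vector_derivative (a + (symp a (D 1 t) + s * symp v (D 2 t)) *\<^sub>R D 2 t, s)) (at 0)"
    unfolding c_def using vt
    by (auto intro!: has_vector_derivative_Pair[THEN has_vector_derivative_eq_rhs] sd simp: w_def symp_simps algebra_simps)
  moreover have "\<forall>\<^sub>F \<tau> in nhds 0. c \<tau> \<in> {(v, t). symp v (D 1 t) = 0}"
    using inX by (intro always_eventually) blast
  ultimately show ?thesis unfolding tangent_space_def using c0 by blast
qed



lemma Delta_tangent:
  assumes smooth: "\<And>k t. (D k has_vector_derivative D (Suc k) t) (at t)"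
    and normalized: "\<And>t. symp (D 1 t) (D 2 t) = 1"
    and u: "(b, s) \<in> tangent_space {(P, t). symp (P - D 0 t) (D 1 t) = 0 \<and> symp (P - D 0 t) (D 2 t) = 0} (P, t)"
    and inD: "symp (P - D 0 t) (D 1 t) = 0" "symp (P - D 0 t) (D 2 t) = 0"
  shows "symp b (D 1 t) = 0 \<and> symp b (D 2 t) = s * (1 - symp (P - D 0 t) (D 3 t))"
proof -
  have gen: "symp (P - D 0 t) (s *\<^sub>R D (Suc j) t) + symp (b - s *\<^sub>R D 1 t) (D j t) = 0"
    if j: "j = 1 \<or> j = 2" for j
  proof (rule tangent_constraint[OF u, where g = "\<lambda>(P, t). symp (P - D 0 t) (D j t)"])
    show "\<forall>y\<in>{(P, t). symp (P - D 0 t) (D 1 t) = 0 \<and> symp (P - D 0 t) (D 2 t) = 0}.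
       (case y of (P, t) \<Rightarrow> symp (P - D 0 t) (D j t)) = 0" using j by auto
    fix c assume c0: "c 0 = (P, t)" and c: "(c has_vector_derivative (b, s)) (at 0)"
    have d1: "((\<lambda>\<tau>. fst (c \<tau>) - D 0 (snd (c \<tau>))) has_vector_derivative b - s *\<^sub>R D 1 (snd (c 0))) (at 0)"
      using has_vector_derivative_diff[OF curve_parts(1)[where D=D, OF smooth c] curve_parts(3)[where D=D and k=0, OF smooth c]]
      by simp
    have "((\<lambda>\<tau>. symp (fst (c \<tau>) - D 0 (snd (c \<tau>))) (D j (snd (c \<tau>)))) has_vector_derivative
       symp (fst (c 0) - D 0 (snd (c 0))) (s *\<^sub>R D (Suc j) (snd (c 0))) + symp (b - s *\<^sub>R D 1 (snd (c 0))) (D j (snd (c 0)))) (at 0)"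
      by (rule symp_vd[OF d1 curve_parts(3)[where D=D, OF smooth c]])
    then show "((\<lambda>\<tau>. case c \<tau> of (P, t) \<Rightarrow> symp (P - D 0 t) (D j t)) has_vector_derivative
        symp (P - D 0 t) (s *\<^sub>R D (Suc j) t) + symp (b - s *\<^sub>R D 1 t) (D j t)) (at 0)"
      using c0 by (simp add: case_prod_beta)
  qed
  have n11: "symp (D 1 t) (D 1 t) = 0" by (rule symp_self)
  from gen[of 1] gen[of 2] inD normalized[of t] n11 show ?thesis
    by (simp add: symp_simps numeral_2_eq_2 numeral_3_eq_3 algebra_simps)
qed

lemma Delta_curve:
  assumes smooth: "\<And>k t. (D k has_vector_derivative D (Suc k) t) (at t)"
    and normalized: "\<And>t. symp (D 1 t) (D 2 t) = 1"
    and inD: "symp (P - D 0 t) (D 1 t) = 0" "symp (P - D 0 t) (D 2 t) = 0"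
    and b1: "symp b (D 1 t) = 0"
    and s: "symp b (D 2 t) = s * (1 - symp (P - D 0 t) (D 3 t))"
  shows "(b, s) \<in> tangent_space {(P, t). symp (P - D 0 t) (D 1 t) = 0 \<and> symp (P - D 0 t) (D 2 t) = 0} (P, t)"
proof -
  define R where "R = (\<lambda>\<tau>::real. P + \<tau> *\<^sub>R b - D 0 (t + \<tau> * s))"
  define e1 where "e1 = (\<lambda>\<tau>. symp (R \<tau>) (D 1 (t + \<tau> * s)))"
  define e2 where "e2 = (\<lambda>\<tau>. symp (R \<tau>) (D 2 (t + \<tau> * s)))"
  define c where "c = (\<lambda>\<tau>. (P + \<tau> *\<^sub>R b - e2 \<tau> *\<^sub>R D 1 (t + \<tau> * s) + e1 \<tau> *\<^sub>R D 2 (t + \<tau> * s), t + \<tau> * s))"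
  have n21: "symp (D 2 t') (D 1 t') = -1" for t' using normalized[of t'] symp_antisym[of "D 2 t'" "D 1 t'"] by simp
  have inX: "c \<tau> \<in> {(P, t). symp (P - D 0 t) (D 1 t) = 0 \<and> symp (P - D 0 t) (D 2 t) = 0}" for \<tau>
  proof -
    have eq: "P + \<tau> *\<^sub>R b - e2 \<tau> *\<^sub>R D 1 (t + \<tau> * s) + e1 \<tau> *\<^sub>R D 2 (t + \<tau> * s) - D 0 (t + \<tau> * s)
      = R \<tau> - e2 \<tau> *\<^sub>R D 1 (t + \<tau> * s) + e1 \<tau> *\<^sub>R D 2 (t + \<tau> * s)" by (simp add: R_def algebra_simps)
    show ?thesis unfolding c_def using n21 normalized
      by (simp only: mem_Collect_eq case_prod_conv eq) (simp add: symp_simps e1_def e2_def)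
  qed
  have c0: "c 0 = (P, t)" using inD by (simp add: c_def e1_def e2_def R_def)
  have sd: "((\<lambda>\<tau>::real. t + \<tau> * s) has_vector_derivative s) (at 0)"
    by (auto intro!: derivative_eq_intros simp: has_vector_derivative_def)
  have Rd: "(R has_vector_derivative b - s *\<^sub>R D 1 t) (at 0)" unfolding R_def
    by (auto intro!: derivative_eq_intros D_lin[where D=D and k=0, OF smooth, simplified])
  have e1d: "(e1 has_real_derivative symp (R 0) (s *\<^sub>R D 2 t) + symp (b - s *\<^sub>R D 1 t) (D 1 t)) (at 0)"
    using symp_vd[OF Rd D_lin[where D=D and k=1 and t=t and s=s, OF smooth]]
    by (simp add: e1_def numeral_2_eq_2 has_real_derivative_iff_has_vector_derivative)
  have e2d: "(e2 has_real_derivative symp (R 0) (s *\<^sub>R D 3 t) + symp (b - s *\<^sub>R D 1 t) (D 2 t)) (at 0)"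
    using symp_vd[OF Rd D_lin[where D=D and k=2 and t=t and s=s, OF smooth]]
    by (simp add: e2_def numeral_2_eq_2 numeral_3_eq_3 has_real_derivative_iff_has_vector_derivative)
  have R0: "R 0 = P - D 0 t" by (simp add: R_def)
  have e10: "e1 0 = 0" "e2 0 = 0" using inD by (simp_all add: e1_def e2_def R0)
  have e1v: "symp (R 0) (s *\<^sub>R D 2 t) + symp (b - s *\<^sub>R D 1 t) (D 1 t) = 0"
    using inD b1 by (simp add: R0 symp_simps)
  have e2v: "symp (R 0) (s *\<^sub>R D 3 t) + symp (b - s *\<^sub>R D 1 t) (D 2 t) = 0"
    using inD s normalized[of t] by (simp add: R0 symp_simps algebra_simps)
  have d1: "((\<lambda>\<tau>::real. D 1 (t + \<tau> * s)) has_vector_derivative s *\<^sub>R D 2 t) (at 0)"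
    using D_lin[where D=D and k=1 and t=t and s=s, OF smooth] by (simp add: numeral_2_eq_2)
  have d2: "((\<lambda>\<tau>::real. D 2 (t + \<tau> * s)) has_vector_derivative s *\<^sub>R D 3 t) (at 0)"
    using D_lin[where D=D and k=2 and t=t and s=s, OF smooth] by (simp add: numeral_2_eq_2 numeral_3_eq_3)
  have Pb: "((\<lambda>\<tau>::real. P + \<tau> *\<^sub>R b) has_vector_derivative b) (at 0)"
    by (auto intro!: derivative_eq_intros)
  have "((\<lambda>\<tau>. P + \<tau> *\<^sub>R b - e2 \<tau> *\<^sub>R D 1 (t + \<tau> * s) + e1 \<tau> *\<^sub>R D 2 (t + \<tau> * s)) has_vector_derivative b) (at 0)"
    using has_vector_derivative_add[OF has_vector_derivative_diff[OF Pb has_vector_derivative_scaleR[OF e2d d1]] has_vector_derivative_scaleR[OF e1d d2]]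
    by (rule has_vector_derivative_eq_rhs) (simp add: e10 e1v[simplified] e2v[simplified])
  then have "(c has_vector_derivative (b, s)) (at 0)"
    unfolding c_def using e10
    by (auto intro!: has_vector_derivative_Pair sd)
  moreover have "\<forall>\<^sub>F \<tau> in nhds 0. c \<tau> \<in> {(P, t). symp (P - D 0 t) (D 1 t) = 0 \<and> symp (P - D 0 t) (D 2 t) = 0}"
    using inX by (intro always_eventually) blast
  ultimately show ?thesis unfolding tangent_space_def using c0 by blast
qed



theorem mainTheorem9:
  fixes D :: "nat \<Rightarrow> real \<Rightarrow> (real^'d) \<times> (real^'d)"
    and L :: real
  assumes smooth: "\<And>k t. (D k has_vector_derivative D (Suc k) t) (at t)"
    and closed: "L > 0" "\<And>t. D 0 (t + L) = D 0 t"
    and normalized: "\<And>t. symp (D 1 t) (D 2 t) = 1"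
  defines "X \<equiv> {(v, t). symp v (D 1 t) = 0}"
    and "\<Psi> \<equiv> (\<lambda>(v, t). D 0 t + v)"
    and "\<Delta> \<equiv> {(P, t). symp (P - D 0 t) (D 1 t) = 0 \<and> symp (P - D 0 t) (D 2 t) = 0}"
  shows "singular_values \<Psi> X =
           {P. \<exists>t. symp P (D 1 t) = symp (D 0 t) (D 1 t) \<and> symp P (D 2 t) = symp (D 0 t) (D 2 t)}
       \<and> {P. \<exists>t. (P, t) \<in> \<Delta> \<and> restr_rank fst \<Delta> (P, t) < DIM((real^'d) \<times> (real^'d)) - 1} =
           {P. \<exists>t. symp P (D 1 t) = symp (D 0 t) (D 1 t) \<and> symp P (D 2 t) = symp (D 0 t) (D 2 t)
                 \<and> symp P (D 3 t) = symp (D 1 t) (D 2 t) + symp (D 0 t) (D 3 t)}"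
proof -
  have D1nz: "D 1 t \<noteq> 0" for t using normalized[of t] by (auto simp: symp_simps)
  have J1nz: "Jm (D 1 t) \<noteq> 0" for t using D1nz by (simp add: Jm_zero)
  have J2nz: "Jm (D 2 t) \<noteq> 0" for t using normalized[of t] by (auto simp: Jm_zero symp_simps)
  have hyp: "symp x y = Jm y \<bullet> x" for x y by (simp add: symp_inner inner_commute)
  have DIMpos: "DIM((real^'d) \<times> (real^'d)) > 0" by simp
  have fdP: "frechet_derivative \<Psi> (at x) = (\<lambda>h. fst h + snd h *\<^sub>R D 1 (snd x))" for x
  proof -
    have a: "(D 0 has_derivative (\<lambda>h. h *\<^sub>R D 1 (snd x))) (at (snd x))"
      using smooth[of 0 "snd x"] by (simp add: has_vector_derivative_def)
    have b: "((\<lambda>x. D 0 (snd x)) has_derivative (\<lambda>h. snd h *\<^sub>R D 1 (snd x))) (at x)"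
      using has_derivative_compose[OF has_derivative_snd[OF has_derivative_ident] a] by simp
    have "(\<Psi> has_derivative (\<lambda>h. snd h *\<^sub>R D 1 (snd x) + fst h)) (at x)"
      unfolding \<Psi>_def case_prod_beta
      by (rule has_derivative_add[OF b has_derivative_fst[OF has_derivative_ident]])
    then show ?thesis by (auto simp: frechet_derivative_at[symmetric] add.commute)
  qed
  have fdfst: "frechet_derivative fst (at x) = fst" for x :: "((real^'d) \<times> (real^'d)) \<times> real"
    using frechet_derivative_at[OF bounded_linear_imp_has_derivative[OF bounded_linear_fst]] by (rule sym)
  have rank1: "restr_rank \<Psi> X (v, t) < DIM((real^'d) \<times> (real^'d)) \<longleftrightarrow> symp v (D 2 t) = 0"
    if vX: "symp v (D 1 t) = 0" for v t
  proof -
    define I where "I = (\<lambda>h. fst h + snd h *\<^sub>R D 1 t) ` tangent_space X (v, t)"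
    have rk: "restr_rank \<Psi> X (v, t) = dim I" by (simp add: restr_rank_def fdP I_def)
    show ?thesis
    proof
      assume lt: "restr_rank \<Psi> X (v, t) < DIM((real^'d) \<times> (real^'d))"
      show "symp v (D 2 t) = 0"
      proof (rule ccontr)
        assume sn: "symp v (D 2 t) \<noteq> 0"
        define \<sigma> where "\<sigma> = symp v (D 2 t)"
        define u where "u = \<sigma> *\<^sub>R D 2 t + D 1 t"
        have uI: "u \<in> I"
        proof -
          have "(0 + (symp 0 (D 1 t) + 1 * symp v (D 2 t)) *\<^sub>R D 2 t, 1) \<in> tangent_space X (v, t)"
            unfolding X_def by (rule X_curve[where D=D, OF smooth normalized vX])
          then show ?thesis unfolding I_def u_def \<sigma>_def by (force simp: symp_simps)
        qed
        have aI: "a \<in> I" if "symp a (D 1 t) = 0" for a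
        proof -
          have "(a + (symp a (D 1 t) + 0 * symp v (D 2 t)) *\<^sub>R D 2 t, 0) \<in> tangent_space X (v, t)"
            unfolding X_def by (rule X_curve[where D=D, OF smooth normalized vX])
          then show ?thesis unfolding I_def using that by force
        qed
        have su: "symp u (D 1 t) = - \<sigma>"
          using normalized[of t] symp_antisym[of "D 2 t" "D 1 t"] by (simp add: u_def symp_simps)
        have "span I = UNIV"
        proof (rule set_eqI, simp)
          fix y
          define \<mu> where "\<mu> = symp y (D 1 t) / symp u (D 1 t)"
          have "symp (y - \<mu> *\<^sub>R u) (D 1 t) = 0"
            using sn su by (simp add: \<mu>_def symp_simps \<sigma>_def)
          then have "y - \<mu> *\<^sub>R u \<in> span I" by (intro span_base aI)
          moreover have "\<mu> *\<^sub>R u \<in> span I" by (intro span_mul span_base uI)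
          ultimately have "(y - \<mu> *\<^sub>R u) + \<mu> *\<^sub>R u \<in> span I" by (rule span_add)
          then show "y \<in> span I" by simp
        qed
        then have "dim I = DIM((real^'d) \<times> (real^'d))" by (metis dim_span dim_UNIV)
        then show False using lt rk by simp
      qed
    next
      assume v2: "symp v (D 2 t) = 0"
      have "I \<subseteq> {x. Jm (D 1 t) \<bullet> x = 0}"
      proof
        fix y assume "y \<in> I"
        then obtain a s where as: "(a, s) \<in> tangent_space X (v, t)" and y: "y = a + s *\<^sub>R D 1 t"
          unfolding I_def by auto
        have "symp a (D 1 t) + s * symp v (D 2 t) = 0"
          using X_tangent[where D=D, OF smooth as[unfolded X_def]] .
        then show "y \<in> {x. Jm (D 1 t) \<bullet> x = 0}" using v2 by (simp add: y hyp[symmetric] symp_simps)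
      qed
      then have "dim I \<le> DIM((real^'d) \<times> (real^'d)) - 1"
        using dim_subset dim_hyperplane[OF J1nz[of t]] by metis
      then show "restr_rank \<Psi> X (v, t) < DIM((real^'d) \<times> (real^'d))" using rk DIMpos by linarith
    qed
  qed
  have P1: "singular_values \<Psi> X =
           {P. \<exists>t. symp P (D 1 t) = symp (D 0 t) (D 1 t) \<and> symp P (D 2 t) = symp (D 0 t) (D 2 t)}"
  proof (intro set_eqI iffI)
    fix P assume "P \<in> singular_values \<Psi> X"
    then obtain v t where vX: "symp v (D 1 t) = 0" and P: "P = D 0 t + v"
      and r: "restr_rank \<Psi> X (v, t) < DIM((real^'d) \<times> (real^'d))"
      unfolding singular_values_def X_def \<Psi>_def by auto
    have "symp v (D 2 t) = 0" using rank1[OF vX] r by simp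
    then show "P \<in> {P. \<exists>t. symp P (D 1 t) = symp (D 0 t) (D 1 t) \<and> symp P (D 2 t) = symp (D 0 t) (D 2 t)}"
      using vX by (intro CollectI exI[of _ t]) (auto simp: P symp_simps)
  next
    fix P assume "P \<in> {P. \<exists>t. symp P (D 1 t) = symp (D 0 t) (D 1 t) \<and> symp P (D 2 t) = symp (D 0 t) (D 2 t)}"
    then obtain t where t: "symp P (D 1 t) = symp (D 0 t) (D 1 t)" "symp P (D 2 t) = symp (D 0 t) (D 2 t)" by auto
    define v where "v = P - D 0 t"
    have vX: "symp v (D 1 t) = 0" and v2: "symp v (D 2 t) = 0" using t by (simp_all add: v_def symp_simps)
    have "restr_rank \<Psi> X (v, t) < DIM((real^'d) \<times> (real^'d))" using rank1[OF vX] v2 by simp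
    moreover have "P = \<Psi> (v, t)" by (simp add: \<Psi>_def v_def)
    ultimately show "P \<in> singular_values \<Psi> X" unfolding singular_values_def X_def using vX by blast
  qed
  have rank2: "restr_rank fst \<Delta> (P, t) < DIM((real^'d) \<times> (real^'d)) - 1 \<longleftrightarrow> 1 - symp (P - D 0 t) (D 3 t) = 0"
    if i1: "symp (P - D 0 t) (D 1 t) = 0" and i2: "symp (P - D 0 t) (D 2 t) = 0" for P t
  proof -
    define I where "I = fst ` tangent_space \<Delta> (P, t)"
    define \<kappa> where "\<kappa> = 1 - symp (P - D 0 t) (D 3 t)"
    define H where "H = {x. Jm (D 1 t) \<bullet> x = 0}"
    define W where "W = {x. Jm (D 1 t) \<bullet> x = 0} \<inter> {x. Jm (D 2 t) \<bullet> x = 0}"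
    have rk: "restr_rank fst \<Delta> (P, t) = dim I" by (simp add: restr_rank_def fdfst I_def)
    have dH: "dim H = DIM((real^'d) \<times> (real^'d)) - 1" unfolding H_def by (rule dim_hyperplane[OF J1nz])
    show ?thesis unfolding \<kappa>_def[symmetric]
    proof
      assume lt: "restr_rank fst \<Delta> (P, t) < DIM((real^'d) \<times> (real^'d)) - 1"
      show "\<kappa> = 0"
      proof (rule ccontr)
        assume kn: "\<kappa> \<noteq> 0"
        have "H \<subseteq> I"
        proof
          fix b assume "b \<in> H"
          then have b1: "symp b (D 1 t) = 0" by (simp add: H_def hyp)
          have "(b, symp b (D 2 t) / \<kappa>) \<in> tangent_space \<Delta> (P, t)"
            unfolding \<Delta>_def
            by (rule Delta_curve[where D=D, OF smooth normalized i1 i2 b1]) (use kn in \<open>simp add: \<kappa>_def\<close>)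
          then show "b \<in> I" unfolding I_def by force
        qed
        then have "dim H \<le> dim I" by (rule dim_subset)
        then show False using lt rk dH by simp
      qed
    next
      assume k0: "\<kappa> = 0"
      have "I \<subseteq> W"
      proof
        fix y assume "y \<in> I"
        then obtain s where as: "(y, s) \<in> tangent_space \<Delta> (P, t)" unfolding I_def by force
        have "symp y (D 1 t) = 0 \<and> symp y (D 2 t) = s * (1 - symp (P - D 0 t) (D 3 t))"
          by (rule Delta_tangent[where D=D, OF smooth normalized as[unfolded \<Delta>_def] i1 i2])
        then show "y \<in> W" using k0 by (simp add: W_def hyp[symmetric] \<kappa>_def)
      qed
      then have "dim I \<le> dim W" by (rule dim_subset)
      moreover have "dim W < dim H"
      proof (rule dim_psubset)
        have sW: "subspace W" unfolding W_def by (intro subspace_inter subspace_hyperplane)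
        have sH: "subspace H" unfolding H_def by (rule subspace_hyperplane)
        have "D 1 t \<in> H" "D 1 t \<notin> W"
          using normalized[of t] by (auto simp: H_def W_def hyp[symmetric] symp_simps)
        moreover have "W \<subseteq> H" by (auto simp: W_def H_def)
        ultimately show "span W \<subset> span H" using sW sH by (simp add: span_eq_iff[THEN iffD2]) blast
      qed
      ultimately show "restr_rank fst \<Delta> (P, t) < DIM((real^'d) \<times> (real^'d)) - 1"
        using rk dH by simp
    qed
  qed
  have P2: "{P. \<exists>t. (P, t) \<in> \<Delta> \<and> restr_rank fst \<Delta> (P, t) < DIM((real^'d) \<times> (real^'d)) - 1} =
           {P. \<exists>t. symp P (D 1 t) = symp (D 0 t) (D 1 t) \<and> symp P (D 2 t) = symp (D 0 t) (D 2 t)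
                 \<and> symp P (D 3 t) = symp (D 1 t) (D 2 t) + symp (D 0 t) (D 3 t)}"
  proof (intro set_eqI iffI)
    fix P assume "P \<in> {P. \<exists>t. (P, t) \<in> \<Delta> \<and> restr_rank fst \<Delta> (P, t) < DIM((real^'d) \<times> (real^'d)) - 1}"
    then obtain t where i1: "symp (P - D 0 t) (D 1 t) = 0" and i2: "symp (P - D 0 t) (D 2 t) = 0"
      and r: "restr_rank fst \<Delta> (P, t) < DIM((real^'d) \<times> (real^'d)) - 1"
      unfolding \<Delta>_def by auto
    have "1 - symp (P - D 0 t) (D 3 t) = 0" using rank2[OF i1 i2] r by simp
    then show "P \<in> {P. \<exists>t. symp P (D 1 t) = symp (D 0 t) (D 1 t) \<and> symp P (D 2 t) = symp (D 0 t) (D 2 t)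
                 \<and> symp P (D 3 t) = symp (D 1 t) (D 2 t) + symp (D 0 t) (D 3 t)}"
      using i1 i2 normalized[of t] by (auto simp: symp_simps algebra_simps)
  next
    fix P assume "P \<in> {P. \<exists>t. symp P (D 1 t) = symp (D 0 t) (D 1 t) \<and> symp P (D 2 t) = symp (D 0 t) (D 2 t)
                 \<and> symp P (D 3 t) = symp (D 1 t) (D 2 t) + symp (D 0 t) (D 3 t)}"
    then obtain t where t: "symp P (D 1 t) = symp (D 0 t) (D 1 t)" "symp P (D 2 t) = symp (D 0 t) (D 2 t)"
      "symp P (D 3 t) = symp (D 1 t) (D 2 t) + symp (D 0 t) (D 3 t)" by auto
    have i1: "symp (P - D 0 t) (D 1 t) = 0" and i2: "symp (P - D 0 t) (D 2 t) = 0"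
      and k: "1 - symp (P - D 0 t) (D 3 t) = 0"
      using t normalized[of t] by (simp_all add: symp_simps)
    have "restr_rank fst \<Delta> (P, t) < DIM((real^'d) \<times> (real^'d)) - 1" using rank2[OF i1 i2] k by simp
    then show "P \<in> {P. \<exists>t. (P, t) \<in> \<Delta> \<and> restr_rank fst \<Delta> (P, t) < DIM((real^'d) \<times> (real^'d)) - 1}"
      using i1 i2 unfolding \<Delta>_def by blast
  qed
  show ?thesis using P1 P2 by blast
qed

end
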